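(* Let $(X,\mathrm{dist})$ be a metric space, $\Sigma$ a metric space, and $\{U_\sigma(t,\tau)\}_{\sigma\in\Sigma}$ a family of processes on $X$. Then: (i) $A^\star_\Sigma$ is contained in every closed uniformly attracting set. (ii) For every bounded set $C\subset X$, $\omega_\Sigma(C)\subset A^\star_\Sigma$; moreover $A^\star_\Sigma=\bigcup\omega_\Sigma(C)$, the union taken over all bounded sets $C\subset X$. (iii) If the family is uniformly dissipative, then for every bounded uniformly absorbing set $B$ and every bounded set $C$ we have $\omega_\Sigma(C)\subset\omega_\Sigma(B)=A^\star_\Sigma$; in particular $A^\star_\Sigma$ is closed in $X$.
   Context: A process on $X$ is a family of maps $U(t,\tau):X\to X$, indexed by reals $t\ge\tau$, with $U(\tau,\tau)=\mathrm{id}_X$ and $U(t,\tau)=U(t,s)U(s,\tau)$ for $t\ge s\ge\tau$; no continuity is assumed. For nonempty $B,C\subset X$, $\delta_X(B,C)=\sup_{x\in B}\inf_{\xi\in C}\mathrm{dist}(x,\xi)$. A set $K\subset X$ is uniformly attracting if for every bounded $C\subset X$, $\lim_{t-\tau\to\infty}\sup_{\sigma\in\Sigma}\delta_X(U_\sigma(t,\tau)C,K)=0$. A set $B\subset X$ is uniformly absorbing if for every bounded $C\subset X$ there is $t_e=t_e(C)$ with $U_\sigma(t,\tau)C\subset B$ for all $\sigma\in\Sigma$ whenever $t-\tau\ge t_e$. The family is uniformly dissipative if it has a bounded uniformly absorbing set. $\mathfrak{C}_\Sigma$ is the collection of all sequences $y_n=U_{\sigma_n}(t_n,\tau_n)x_n$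 with $x_n$ a bounded sequence in $X$, $\sigma_n\in\Sigma$, $t_n-\tau_n\to\infty$. For $y_n\in\mathfrak{C}_\Sigma$, $L_\Sigma(y_n)=\{x\in X: y_n\to x \text{ along some subsequence}\}$. $A^\star_\Sigma=\{x\in X: y_n\to x$ along a subsequence, for some $y_n\in\mathfrak{C}_\Sigma\}$. For bounded $C\subset X$, $\omega_\Sigma(C)=\bigcap_{h\ge0}\overline{\bigcup_{\sigma\in\Sigma}\bigcup_{t-\tau\ge h}U_\sigma(t,\tau)C}$ (closure in $X$). These sets may be empty. *)

theory Defs
  imports "HOL-Analysis.Analysis"
begin

definition process_family :: "'s set \<Rightarrow> ('s \<Rightarrow> real \<Rightarrow> real \<Rightarrow> 'a \<Rightarrow> 'a) \<Rightarrow> bool" where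
  "process_family Sig U \<longleftrightarrow>
     (\<forall>\<sigma>\<in>Sig. (\<forall>\<tau>. U \<sigma> \<tau> \<tau> = id) \<and>
        (\<forall>t s \<tau>. \<tau> \<le> s \<and> s \<le> t \<longrightarrow> U \<sigma> t \<tau> = U \<sigma> t s \<circ> U \<sigma> s \<tau>))"

text \<open>Hausdorff semidistance with values in [0,\<infinity>]: sup over empty = 0, inf over empty = \<infinity>.\<close>
definition hsemidist :: "'a::metric_space set \<Rightarrow> 'a set \<Rightarrow> ennreal" where
  "hsemidist B C = (SUP x\<in>B. INF \<xi>\<in>C. ennreal (dist x \<xi>))"

definition unif_attracting :: "'s set \<Rightarrow> ('s \<Rightarrow> real \<Rightarrow> real \<Rightarrow> 'a::metric_space \<Rightarrow> 'a) \<Rightarrow> 'a set \<Rightarrow> bool" where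
  "unif_attracting Sig U K \<longleftrightarrow>
     (\<forall>C. bounded C \<longrightarrow>
        (\<forall>\<epsilon>>0. \<exists>T. \<forall>t \<tau>. t - \<tau> \<ge> T \<longrightarrow>
            (SUP \<sigma>\<in>Sig. hsemidist (U \<sigma> t \<tau> ` C) K) < \<epsilon>))"

definition unif_absorbing :: "'s set \<Rightarrow> ('s \<Rightarrow> real \<Rightarrow> real \<Rightarrow> 'a::metric_space \<Rightarrow> 'a) \<Rightarrow> 'a set \<Rightarrow> bool" where
  "unif_absorbing Sig U B \<longleftrightarrow>
     (\<forall>C. bounded C \<longrightarrow>
        (\<exists>te. \<forall>\<sigma>\<in>Sig. \<forall>t \<tau>. t - \<tau> \<ge> te \<longrightarrow> U \<sigma> t \<tau> ` C \<subseteq> B))"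

definition unif_dissipative :: "'s set \<Rightarrow> ('s \<Rightarrow> real \<Rightarrow> real \<Rightarrow> 'a::metric_space \<Rightarrow> 'a) \<Rightarrow> bool" where
  "unif_dissipative Sig U \<longleftrightarrow> (\<exists>B. bounded B \<and> unif_absorbing Sig U B)"

definition in_CSig :: "'s set \<Rightarrow> ('s \<Rightarrow> real \<Rightarrow> real \<Rightarrow> 'a::metric_space \<Rightarrow> 'a) \<Rightarrow> (nat \<Rightarrow> 'a) \<Rightarrow> bool" where
  "in_CSig Sig U y \<longleftrightarrow>
     (\<exists>x \<sigma> t \<tau>. bounded (range x) \<and> (\<forall>n. \<sigma> n \<in> Sig) \<and>
        filterlim (\<lambda>n. t n - \<tau> n) at_top sequentially \<and>
        (\<forall>n. y n = U (\<sigma> n) (t n) (\<tau> n) (x n)))"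

definition LSig :: "(nat \<Rightarrow> 'a::metric_space) \<Rightarrow> 'a set" where
  "LSig y = {x. \<exists>r. strict_mono r \<and> (y \<circ> r) \<longlonglongrightarrow> x}"

definition Astar :: "'s set \<Rightarrow> ('s \<Rightarrow> real \<Rightarrow> real \<Rightarrow> 'a::metric_space \<Rightarrow> 'a) \<Rightarrow> 'a set" where
  "Astar Sig U = {x. \<exists>y. in_CSig Sig U y \<and> x \<in> LSig y}"

definition omegaSig :: "'s set \<Rightarrow> ('s \<Rightarrow> real \<Rightarrow> real \<Rightarrow> 'a::metric_space \<Rightarrow> 'a) \<Rightarrow> 'a set \<Rightarrow> 'a set" where
  "omegaSig Sig U C =
     (\<Inter>h\<in>{0..}. closure (\<Union>\<sigma>\<in>Sig. \<Union>{U \<sigma> t \<tau> ` C | t \<tau>. t - \<tau> \<ge> h}))"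

end

theory Submission
  imports Defs
begin

lemma Astar_D:
  assumes "x \<in> Astar Sig U"
  shows "\<exists>xs \<sigma> t \<tau>. bounded (range xs) \<and> (\<forall>n. \<sigma> n \<in> Sig) \<and>
     filterlim (\<lambda>n. t n - \<tau> n) at_top sequentially \<and>
     (\<lambda>n. U (\<sigma> n) (t n) (\<tau> n) (xs n)) \<longlonglongrightarrow> x"
proof -
  obtain y where y: "in_CSig Sig U y" "x \<in> LSig y" using assms unfolding Astar_def by auto
  obtain xs \<sigma> t \<tau> where h: "bounded (range xs)" "\<forall>n. \<sigma> n \<in> Sig"
    "filterlim (\<lambda>n. t n - \<tau> n) at_top sequentially" "\<forall>n. y n = U (\<sigma> n) (t n) (\<tau> n) (xs n)"
    using y(1) unfolding in_CSig_def by blast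
  obtain r where r: "strict_mono r" "(y \<circ> r) \<longlonglongrightarrow> x" using y(2) unfolding LSig_def by auto
  have "bounded (range (xs \<circ> r))"
    by (rule bounded_subset[OF h(1)]) auto
  moreover have "filterlim (\<lambda>n. t (r n) - \<tau> (r n)) at_top sequentially"
    using filterlim_compose[OF h(3) filterlim_subseq[OF r(1)]] by simp
  moreover have "(\<lambda>n. U (\<sigma> (r n)) (t (r n)) (\<tau> (r n)) (xs (r n))) \<longlonglongrightarrow> x"
    using r(2) h(4) by (simp add: o_def)
  ultimately show ?thesis using h(2)
    by (intro exI[of _ "xs \<circ> r"] exI[of _ "\<sigma> \<circ> r"] exI[of _ "t \<circ> r"] exI[of _ "\<tau> \<circ> r"]) auto
qed

lemma Astar_I:
  assumes "bounded (range xs)" "\<forall>n. \<sigma> n \<in> Sig"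
     "filterlim (\<lambda>n. t n - \<tau> n) at_top sequentially"
     "(\<lambda>n. U (\<sigma> n) (t n) (\<tau> n) (xs n)) \<longlonglongrightarrow> x"
  shows "x \<in> Astar Sig U"
proof -
  have "in_CSig Sig U (\<lambda>n. U (\<sigma> n) (t n) (\<tau> n) (xs n))"
    unfolding in_CSig_def using assms by blast
  moreover have "x \<in> LSig (\<lambda>n. U (\<sigma> n) (t n) (\<tau> n) (xs n))"
    unfolding LSig_def using assms(4) by (intro CollectI exI[of _ id]) (auto simp: strict_mono_def o_def)
  ultimately show ?thesis unfolding Astar_def by blast
qed

lemma omega_Astar:
  assumes "bounded C" "x \<in> omegaSig Sig U C"
  shows "x \<in> Astar Sig U"
proof -
  have "\<forall>n::nat. \<exists>\<sigma> t \<tau> c. \<sigma> \<in> Sig \<and> t - \<tau> \<ge> real n \<and> c \<in> C \<and> dist (U \<sigma> t \<tau> c) x < 1 / Suc n"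
  proof
    fix n :: nat
    have "x \<in> closure (\<Union>\<sigma>\<in>Sig. \<Union>{U \<sigma> t \<tau> ` C | t \<tau>. t - \<tau> \<ge> real n})"
      using assms(2) unfolding omegaSig_def by auto
    then obtain z where "z \<in> (\<Union>\<sigma>\<in>Sig. \<Union>{U \<sigma> t \<tau> ` C | t \<tau>. t - \<tau> \<ge> real n})" "dist z x < 1 / Suc n"
      unfolding closure_approachable by (meson divide_pos_pos of_nat_0_less_iff zero_less_Suc zero_less_one)
    then show "\<exists>\<sigma> t \<tau> c. \<sigma> \<in> Sig \<and> t - \<tau> \<ge> real n \<and> c \<in> C \<and> dist (U \<sigma> t \<tau> c) x < 1 / Suc n"
      by blast
  qed
  then obtain \<sigma> t \<tau> c where h: "\<forall>n. \<sigma> n \<in> Sig \<and> t n - \<tau> n \<ge> real n \<and> c n \<in> C \<and> dist (U (\<sigma> n) (t n) (\<tau> n) (c n)) x < 1 / Suc n"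
    by (subst (asm) choice_iff; subst (asm) choice_iff; subst (asm) choice_iff; subst (asm) choice_iff) blast
  show ?thesis
  proof (rule Astar_I[of c \<sigma> Sig t \<tau>])
    show "bounded (range c)" using h by (intro bounded_subset[OF assms(1)]) auto
    show "\<forall>n. \<sigma> n \<in> Sig" using h by auto
    show "filterlim (\<lambda>n. t n - \<tau> n) at_top sequentially"
      by (rule filterlim_at_top_mono[OF filterlim_real_sequentially]) (use h in auto)
    show "(\<lambda>n. U (\<sigma> n) (t n) (\<tau> n) (c n)) \<longlonglongrightarrow> x"
    proof (rule metric_LIMSEQ_I)
      fix e :: real assume "e > 0"
      then obtain N where N: "1 / Suc N < e" using nat_approx_posE by blast
      show "\<exists>no. \<forall>n\<ge>no. dist (U (\<sigma> n) (t n) (\<tau> n) (c n)) x < e"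
      proof (intro exI allI impI)
        fix n assume "n \<ge> N"
        then have "1 / real (Suc n) \<le> 1 / Suc N" by (simp add: frac_le)
        moreover have "dist (U (\<sigma> n) (t n) (\<tau> n) (c n)) x < 1 / Suc n" using h by blast
        ultimately show "dist (U (\<sigma> n) (t n) (\<tau> n) (c n)) x < e" using N by linarith
      qed
    qed
  qed
qed

lemma Astar_omega_range:
  assumes "\<forall>n. \<sigma> n \<in> Sig" "filterlim (\<lambda>n. t n - \<tau> n) at_top sequentially"
    "(\<lambda>n. U (\<sigma> n) (t n) (\<tau> n) (xs n)) \<longlonglongrightarrow> x"
  shows "x \<in> omegaSig Sig U (range xs)"
  unfolding omegaSig_def
proof (rule INT_I)
  fix h :: real assume "h \<in> {0..}"
  let ?S = "\<Union>\<sigma>\<in>Sig. \<Union>{U \<sigma> t \<tau> ` range xs | t \<tau>. t - \<tau> \<ge> h}"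
  have ev: "eventually (\<lambda>n. t n - \<tau> n \<ge> h) sequentially"
    using assms(2) unfolding filterlim_at_top by blast
  have "eventually (\<lambda>n. U (\<sigma> n) (t n) (\<tau> n) (xs n) \<in> closure ?S) sequentially"
  proof (rule eventually_mono[OF ev])
    fix n assume "t n - \<tau> n \<ge> h"
    then have "U (\<sigma> n) (t n) (\<tau> n) (xs n) \<in> U (\<sigma> n) (t n) (\<tau> n) ` range xs"
      and "U (\<sigma> n) (t n) (\<tau> n) ` range xs \<in> {U (\<sigma> n) t \<tau> ` range xs | t \<tau>. t - \<tau> \<ge> h}" by auto
    then have "U (\<sigma> n) (t n) (\<tau> n) (xs n) \<in> ?S" using assms(1) by (intro UN_I[of "\<sigma> n"]) auto
    then show "U (\<sigma> n) (t n) (\<tau> n) (xs n) \<in> closure ?S" by (rule closure_subset[THEN subsetD])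
  qed
  then show "x \<in> closure ?S"
    using Lim_in_closed_set[OF closed_closure _ trivial_limit_sequentially assms(3)] by blast
qed

lemma Astar_omega_abs:
  assumes pf: "process_family Sig U" and ab: "unif_absorbing Sig U B" and bd: "bounded (range xs)"
    and "\<forall>n. \<sigma> n \<in> Sig" "filterlim (\<lambda>n. t n - \<tau> n) at_top sequentially"
    "(\<lambda>n. U (\<sigma> n) (t n) (\<tau> n) (xs n)) \<longlonglongrightarrow> x"
  shows "x \<in> omegaSig Sig U B"
  unfolding omegaSig_def
proof (rule INT_I)
  fix h :: real assume h: "h \<in> {0..}"
  obtain te where te: "\<forall>\<sigma>\<in>Sig. \<forall>t \<tau>. t - \<tau> \<ge> te \<longrightarrow> U \<sigma> t \<tau> ` range xs \<subseteq> B"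
    using ab bd unfolding unif_absorbing_def by blast
  define te' where "te' = max te 0"
  let ?S = "\<Union>\<sigma>\<in>Sig. \<Union>{U \<sigma> t \<tau> ` B | t \<tau>. t - \<tau> \<ge> h}"
  have ev: "eventually (\<lambda>n. t n - \<tau> n \<ge> h + te') sequentially"
    using assms(5) unfolding filterlim_at_top by blast
  have "eventually (\<lambda>n. U (\<sigma> n) (t n) (\<tau> n) (xs n) \<in> closure ?S) sequentially"
  proof (rule eventually_mono[OF ev])
    fix n assume n: "t n - \<tau> n \<ge> h + te'"
    define s where "s = \<tau> n + te'"
    have comp: "U (\<sigma> n) (t n) (\<tau> n) = U (\<sigma> n) (t n) s \<circ> U (\<sigma> n) s (\<tau> n)"
      proof -
      have law: "\<forall>t s \<tau>. \<tau> \<le> s \<and> s \<le> t \<longrightarrow> U (\<sigma> n) t \<tau> = U (\<sigma> n) t s \<circ> U (\<sigma> n) s \<tau>"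
        using pf assms(4) unfolding process_family_def by blast
      have "\<tau> n \<le> s" "s \<le> t n" using n h unfolding s_def te'_def by auto
      then show ?thesis using law by blast
    qed
    have "U (\<sigma> n) s (\<tau> n) (xs n) \<in> B"
      proof -
      have "s - \<tau> n \<ge> te" unfolding s_def te'_def by simp
      then have "U (\<sigma> n) s (\<tau> n) ` range xs \<subseteq> B" using te assms(4) by blast
      then show ?thesis by blast
    qed
    moreover have "t n - s \<ge> h" using n unfolding s_def by simp
    ultimately have "U (\<sigma> n) (t n) (\<tau> n) (xs n) \<in> U (\<sigma> n) (t n) s ` B"
      and "U (\<sigma> n) (t n) s ` B \<in> {U (\<sigma> n) t \<tau> ` B | t \<tau>. t - \<tau> \<ge> h}" using comp by auto
    then have "U (\<sigma> n) (t n) (\<tau> n) (xs n) \<in> ?S" using assms(4) by (intro UN_I[of "\<sigma> n"]) auto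
    then show "U (\<sigma> n) (t n) (\<tau> n) (xs n) \<in> closure ?S" by (rule closure_subset[THEN subsetD])
  qed
  then show "x \<in> closure ?S"
    using Lim_in_closed_set[OF closed_closure _ trivial_limit_sequentially assms(6)] by blast
qed

lemma Astar_attr:
  assumes cl: "closed K" and at: "unif_attracting Sig U K" and bd: "bounded (range xs)"
    and "\<forall>n. \<sigma> n \<in> Sig" "filterlim (\<lambda>n. t n - \<tau> n) at_top sequentially"
    "(\<lambda>n. U (\<sigma> n) (t n) (\<tau> n) (xs n)) \<longlonglongrightarrow> x"
  shows "x \<in> K"
proof (rule closed_approachable[OF cl, THEN iffD1, rule_format])
  fix e :: real assume e: "e > 0"
  then have e2: "ennreal (e/2) > 0" by simp
  obtain T where T: "\<forall>t \<tau>. t - \<tau> \<ge> T \<longrightarrow> (SUP \<sigma>\<in>Sig. hsemidist (U \<sigma> t \<tau> ` range xs) K) < ennreal (e/2)"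
    using at bd e2 unfolding unif_attracting_def by blast
  have ev1: "eventually (\<lambda>n. t n - \<tau> n \<ge> T) sequentially"
    using assms(5) unfolding filterlim_at_top by blast
  have ev2: "eventually (\<lambda>n. dist (U (\<sigma> n) (t n) (\<tau> n) (xs n)) x < e/2) sequentially"
    using assms(6) e unfolding tendsto_iff by (meson half_gt_zero)
  obtain n where n1: "t n - \<tau> n \<ge> T" and n2: "dist (U (\<sigma> n) (t n) (\<tau> n) (xs n)) x < e/2"
    using eventually_happens[OF eventually_conj[OF ev1 ev2]] by auto
  let ?y = "U (\<sigma> n) (t n) (\<tau> n) (xs n)"
  have "hsemidist (U (\<sigma> n) (t n) (\<tau> n) ` range xs) K \<le> (SUP \<sigma>\<in>Sig. hsemidist (U \<sigma> (t n) (\<tau> n) ` range xs) K)"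
    using assms(4) by (intro SUP_upper) auto
  with T n1 have "hsemidist (U (\<sigma> n) (t n) (\<tau> n) ` range xs) K < ennreal (e/2)" by (meson order.strict_trans1)
  moreover have "(INF \<xi>\<in>K. ennreal (dist ?y \<xi>)) \<le> hsemidist (U (\<sigma> n) (t n) (\<tau> n) ` range xs) K"
    unfolding hsemidist_def by (intro SUP_upper) auto
  ultimately have "(INF \<xi>\<in>K. ennreal (dist ?y \<xi>)) < ennreal (e/2)" by (meson order.strict_trans1)
  then obtain \<xi> where xi: "\<xi> \<in> K" "ennreal (dist ?y \<xi>) < ennreal (e/2)"
    by (auto simp: INF_less_iff)
  then have "dist ?y \<xi> < e/2" by (simp add: ennreal_less_iff)
  then have "dist \<xi> x < e" using n2 dist_triangle[of \<xi> x ?y] by (simp add: dist_commute)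
  then show "\<exists>y\<in>K. dist y x < e" using xi by blast
qed

theorem lemma2p6:
  fixes Sig :: "'s::metric_space set"
    and U :: "'s \<Rightarrow> real \<Rightarrow> real \<Rightarrow> 'a::metric_space \<Rightarrow> 'a"
  assumes "process_family Sig U"
  shows "(\<forall>K. closed K \<and> unif_attracting Sig U K \<longrightarrow> Astar Sig U \<subseteq> K)
    \<and> (\<forall>C. bounded C \<longrightarrow> omegaSig Sig U C \<subseteq> Astar Sig U)
    \<and> Astar Sig U = (\<Union>C\<in>{C. bounded C}. omegaSig Sig U C)
    \<and> (unif_dissipative Sig U \<longrightarrow>
         (\<forall>B C. bounded B \<and> unif_absorbing Sig U B \<and> bounded C \<longrightarrow>
             omegaSig Sig U C \<subseteq> omegaSig Sig U B \<and> omegaSig Sig U B = Astar Sig U)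
         \<and> closed (Astar Sig U))"
proof -
  have P1: "\<forall>K. closed K \<and> unif_attracting Sig U K \<longrightarrow> Astar Sig U \<subseteq> K"
  proof (intro allI impI subsetI)
    fix K x assume K: "closed K \<and> unif_attracting Sig U K" and x: "x \<in> Astar Sig U"
    from Astar_D[OF x] obtain xs \<sigma> t \<tau> where h: "bounded (range xs)" "\<forall>n. \<sigma> n \<in> Sig"
      "filterlim (\<lambda>n. t n - \<tau> n) at_top sequentially" "(\<lambda>n. U (\<sigma> n) (t n) (\<tau> n) (xs n)) \<longlonglongrightarrow> x"
      by blast
    show "x \<in> K" using Astar_attr[of K Sig U xs \<sigma> t \<tau> x] K h by blast
  qed
  have P2: "\<forall>C. bounded C \<longrightarrow> omegaSig Sig U C \<subseteq> Astar Sig U"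
    using omega_Astar by blast
  have P3: "Astar Sig U = (\<Union>C\<in>{C. bounded C}. omegaSig Sig U C)"
  proof
    show "(\<Union>C\<in>{C. bounded C}. omegaSig Sig U C) \<subseteq> Astar Sig U" using P2 by blast
    show "Astar Sig U \<subseteq> (\<Union>C\<in>{C. bounded C}. omegaSig Sig U C)"
    proof
      fix x assume x: "x \<in> Astar Sig U"
      from Astar_D[OF x] obtain xs \<sigma> t \<tau> where h: "bounded (range xs)" "\<forall>n. \<sigma> n \<in> Sig"
        "filterlim (\<lambda>n. t n - \<tau> n) at_top sequentially" "(\<lambda>n. U (\<sigma> n) (t n) (\<tau> n) (xs n)) \<longlonglongrightarrow> x"
        by blast
      have "x \<in> omegaSig Sig U (range xs)" using Astar_omega_range[of \<sigma> Sig t \<tau> U xs x] h by blast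
      then show "x \<in> (\<Union>C\<in>{C. bounded C}. omegaSig Sig U C)" using h(1) by blast
    qed
  qed
  have AB: "Astar Sig U \<subseteq> omegaSig Sig U B" if B: "unif_absorbing Sig U B" for B
  proof
    fix x assume x: "x \<in> Astar Sig U"
    from Astar_D[OF x] obtain xs \<sigma> t \<tau> where h: "bounded (range xs)" "\<forall>n. \<sigma> n \<in> Sig"
      "filterlim (\<lambda>n. t n - \<tau> n) at_top sequentially" "(\<lambda>n. U (\<sigma> n) (t n) (\<tau> n) (xs n)) \<longlonglongrightarrow> x"
      by blast
    show "x \<in> omegaSig Sig U B" using Astar_omega_abs[of Sig U B xs \<sigma> t \<tau> x] assms B h by blast
  qed
  have clo: "closed (omegaSig Sig U B)" for B
    unfolding omegaSig_def by (intro closed_INT) auto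
  have P4: "unif_dissipative Sig U \<longrightarrow>
         (\<forall>B C. bounded B \<and> unif_absorbing Sig U B \<and> bounded C \<longrightarrow>
             omegaSig Sig U C \<subseteq> omegaSig Sig U B \<and> omegaSig Sig U B = Astar Sig U)
         \<and> closed (Astar Sig U)"
  proof
    assume "unif_dissipative Sig U"
    then obtain B0 where B0: "bounded B0" "unif_absorbing Sig U B0" unfolding unif_dissipative_def by blast
    have eq: "omegaSig Sig U B = Astar Sig U" if "bounded B" "unif_absorbing Sig U B" for B
      using AB[OF that(2)] P2 that(1) by blast
    show "(\<forall>B C. bounded B \<and> unif_absorbing Sig U B \<and> bounded C \<longrightarrow>
             omegaSig Sig U C \<subseteq> omegaSig Sig U B \<and> omegaSig Sig U B = Astar Sig U)
         \<and> closed (Astar Sig U)"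
      using eq P2 clo[of B0] eq[OF B0] by metis
  qed
  show ?thesis using P1 P2 P3 P4 by blast
qed

end
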